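(* Let $\mathcal{D}(A)$ be a straight-line drawing of a four-cycle $A$ with vertices $a_1,a_2,a_3,a_4$ and edges $e_k^A=a_ka_{k\bmod 4+1}$ ($k\in[4]$) as a simple quadrilateral. Call $e_k^A$ good if there is a point $p$ in the outer face of $\mathcal{D}(A)$ such that placing a new vertex $q$ at $p$ and joining it by straight-line segments to $a_1,a_2,a_3,a_4$ yields a planar straight-line drawing of $A+q$ in which $e_k^A$ is an edge on the outer face. Then at most two edges of $A$ are good. *)

theory Defs
  imports "HOL-Analysis.Analysis"
begin

definition sl_drawing :: "(nat \<Rightarrow> real^2) \<Rightarrow> nat set set \<Rightarrow> (real^2) set" where
  "sl_drawing pos E = (\<Union>e\<in>E. convex hull (pos ` e))"

definition planar_sl_drawing :: "(nat \<Rightarrow> real^2) \<Rightarrow> nat set \<Rightarrow> nat set set \<Rightarrow> bool" where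
  "planar_sl_drawing pos V E \<longleftrightarrow>
     inj_on pos V \<and>
     (\<forall>e\<in>E. e \<subseteq> V \<and> card e = 2) \<and>
     (\<forall>e\<in>E. \<forall>w\<in>V - e. pos w \<notin> convex hull (pos ` e)) \<and>
     (\<forall>e\<in>E. \<forall>f\<in>E. e \<noteq> f \<longrightarrow> convex hull (pos ` e) \<inter> convex hull (pos ` f) \<subseteq> pos ` (e \<inter> f))"

definition C4_edges :: "nat set set" where
  "C4_edges = {{k, k mod 4 + 1} | k. k \<in> {1..4}}"

text \<open>A + q: the vertex q is numbered 0 and joined to 1,2,3,4.\<close>

definition W4_edges :: "nat set set" where
  "W4_edges = C4_edges \<union> {{0, k} | k. k \<in> {1..4}}"

text \<open>The outer face of a drawing is its unbounded complementary region (outside);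
an edge lies on the outer face if its segment lies on the boundary of that region.\<close>

definition good_edge :: "(nat \<Rightarrow> real^2) \<Rightarrow> nat \<Rightarrow> bool" where
  "good_edge a k \<longleftrightarrow>
     (\<exists>p \<in> outside (sl_drawing a C4_edges).
        planar_sl_drawing (a(0 := p)) {0..4} W4_edges \<and>
        convex hull ((a(0 := p)) ` {k, k mod 4 + 1})
          \<subseteq> frontier (outside (sl_drawing (a(0 := p)) W4_edges)))"

end

theory Submission
  imports Defs
begin


definition cr :: "real^2 \<Rightarrow> real^2 \<Rightarrow> real" where
  "cr u v = u$1 * v$2 - u$2 * v$1"

lemma aux_proj:
  fixes b1 b2 p1 p2 :: real
  assumes c: "b1 * p2 = b2 * p1" and d: "b1 * b1 + b2 * b2 \<noteq> 0"
  shows "p1 = (p1 * b1 + p2 * b2) / (b1 * b1 + b2 * b2) * b1"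
proof -
  have "p1 * (b1 * b1 + b2 * b2) = (p1 * b1 + p2 * b2) * b1"
  proof -
    have "p2 * b2 * b1 = p1 * b2 * b2"
    proof -
      have "p2 * b2 * b1 = b2 * (b1 * p2)" by (simp add: algebra_simps)
      also have "\<dots> = b2 * (b2 * p1)" using c by simp
      finally show ?thesis by (simp add: algebra_simps)
    qed
    then show ?thesis by algebra
  qed
  then have "p1 = ((p1 * b1 + p2 * b2) * b1) / (b1 * b1 + b2 * b2)" using d by (simp add: eq_divide_eq)
  then show ?thesis by simp
qed

lemma cr_zero_collinear:
  fixes P A B :: "real^2"
  assumes "cr (B - A) (P - A) = 0"
  shows "collinear {P, A, B}"
proof (cases "A = B")
  case True then show ?thesis by simp
next
  case False
  define d where "d = (B - A)$1 * (B - A)$1 + (B - A)$2 * (B - A)$2"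
  have "d \<noteq> 0"
  proof
    assume "d = 0"
    then have "(B - A)$1 = 0" "(B - A)$2 = 0" unfolding d_def
      by (metis add_nonneg_eq_0_iff mult_eq_0_iff zero_le_square)+
    then have "B = A" by (simp add: vec_eq_iff forall_2)
    with False show False by simp
  qed
  define k where "k = ((P - A)$1 * (B - A)$1 + (P - A)$2 * (B - A)$2) / d"
  have e: "P = A + k *\<^sub>R (B - A)"
  proof -
    have c: "(B$1 - A$1) * (P$2 - A$2) = (B$2 - A$2) * (P$1 - A$1)"
      using assms by (simp add: cr_def)
    have 1: "P$1 = A$1 + k * (B$1 - A$1)"
      using aux_proj[of "B$1 - A$1" "P$2 - A$2" "B$2 - A$2" "P$1 - A$1"] \<open>d \<noteq> 0\<close> c
      unfolding k_def d_def by simp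
    have 2: "P$2 = A$2 + k * (B$2 - A$2)"
      using aux_proj[of "B$2 - A$2" "P$1 - A$1" "B$1 - A$1" "P$2 - A$2"] \<open>d \<noteq> 0\<close> c
      unfolding k_def d_def by (simp add: algebra_simps)
    show ?thesis using 1 2 by (simp add: vec_eq_iff forall_2)
  qed
  have "\<forall>x\<in>{P, A, B}. \<exists>c. x = A + c *\<^sub>R (B - A)"
    using e by (auto intro: exI[of _ 0] exI[of _ 1] exI[of _ k])
  then show ?thesis unfolding collinear_alt by blast
qed

lemma cr_bary:
  fixes P A B :: "real^2"
  assumes "a + b + c = 1"
  shows "cr (B - A) ((a *\<^sub>R P + b *\<^sub>R A + c *\<^sub>R B) - A) = a * cr (B - A) (P - A)"
proof -
  have b: "b = 1 - a - c" using assms by simp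
  show ?thesis unfolding cr_def b by (simp add: algebra_simps)
qed



lemma ray_meet:
  fixes P A B :: "real^2"
  assumes "a > 0" "b > 0" "c > 0" "a + b + c = 1" "a' > 0" "b' > 0" "c' > 0" "a' + b' + c' = 1"
  shows "\<exists>s t. 0 < s \<and> 0 < t \<and>
     A + s *\<^sub>R ((a *\<^sub>R P + b *\<^sub>R A + c *\<^sub>R B) - A) = B + t *\<^sub>R ((a' *\<^sub>R P + b' *\<^sub>R A + c' *\<^sub>R B) - B)"
proof -
  define den where "den = a' * c + a * (a' + b')"
  have den: "den > 0" unfolding den_def using assms by (simp add: add_pos_pos)
  define s where "s = a' / den"
  define t where "t = a / den"
  have b: "b = 1 - a - c" and c': "c' = 1 - a' - b'" using assms by simp_all
  have "A + s *\<^sub>R ((a *\<^sub>R P + b *\<^sub>R A + c *\<^sub>R B) - A) = B + t *\<^sub>R ((a' *\<^sub>R P + b' *\<^sub>R A + c' *\<^sub>R B) - B)"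
  proof -
    have "\<And>i. A$i + s * (a * P$i + b * A$i + c * B$i - A$i) = B$i + t * (a' * P$i + b' * A$i + c' * B$i - B$i)"
      unfolding s_def t_def b c' using den unfolding den_def
      by (simp add: field_simps)
    then show ?thesis by (simp add: vec_eq_iff)
  qed
  moreover have "0 < s" "0 < t" using den assms by (simp_all add: s_def t_def)
  ultimately show ?thesis by blast
qed



definition c2 :: "real^2 \<Rightarrow> complex" where "c2 x = Complex (x$1) (x$2)"
definition r2 :: "complex \<Rightarrow> real^2" where "r2 z = vector [Re z, Im z]"

lemma c2_linear: "linear c2"
  by (rule linearI) (simp_all add: c2_def complex_eq_iff)

lemma r2_linear: "linear r2"
  by (rule linearI) (simp_all add: r2_def vec_eq_iff forall_2)

lemma r2_c2 [simp]: "r2 (c2 x) = x"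
  by (simp add: r2_def c2_def vec_eq_iff forall_2)

lemma c2_r2 [simp]: "c2 (r2 z) = z"
  by (simp add: r2_def c2_def complex_eq_iff)

lemma inj_c2: "inj c2"
  by (metis injI r2_c2)

lemma inside_c2:
  assumes "w \<in> inside (c2 ` S)"
  shows "r2 w \<in> inside S"
proof -
  have w: "w \<notin> c2 ` S" and bd: "bounded (connected_component_set (- (c2 ` S)) w)"
    using assms by (auto simp: inside_def)
  have nS: "r2 w \<notin> S" using w by (metis c2_r2 image_eqI)
  define CC where "CC = connected_component_set (- S) (r2 w)"
  have "c2 ` CC \<subseteq> connected_component_set (- (c2 ` S)) w"
  proof (rule connected_component_maximal)
    show "w \<in> c2 ` CC" unfolding CC_def
    proof (rule image_eqI)
      show "w = c2 (r2 w)" by simp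
      show "r2 w \<in> connected_component_set (- S) (r2 w)" using nS by simp
    qed
    show "connected (c2 ` CC)" unfolding CC_def
      by (intro connected_continuous_image linear_continuous_on) (auto simp: c2_linear linear_conv_bounded_linear[symmetric])
    show "c2 ` CC \<subseteq> - c2 ` S" unfolding CC_def
    proof
      fix y assume "y \<in> c2 ` connected_component_set (- S) (r2 w)"
      then obtain x where x: "x \<in> connected_component_set (- S) (r2 w)" "y = c2 x" by blast
      then have "x \<notin> S" using connected_component_subset by blast
      then show "y \<in> - c2 ` S" using x(2) inj_c2 by (auto simp: inj_image_mem_iff)
    qed
  qed
  then have "bounded (c2 ` CC)" using bd bounded_subset by blast
  then have "bounded (r2 ` c2 ` CC)"
    using bounded_linear_image r2_linear linear_conv_bounded_linear by blast
  moreover have "r2 ` c2 ` CC = CC" by (simp add: image_image)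
  ultimately show ?thesis using nS by (simp add: inside_def CC_def)
qed

lemma JT:
  fixes g :: "real \<Rightarrow> real^2"
  assumes "simple_path g" "pathfinish g = pathstart g"
  shows "path_image g \<subseteq> closure (inside (path_image g))"
proof
  fix x assume x: "x \<in> path_image g"
  let ?h = "c2 \<circ> g"
  have sp: "simple_path ?h"
    using simple_path_linear_image_eq[OF c2_linear inj_c2] assms(1) by simp
  have lp: "pathfinish ?h = pathstart ?h" using assms(2) by (simp add: pathfinish_compose pathstart_compose)
  have fr: "frontier (inside (path_image ?h)) = path_image ?h"
    using Jordan_inside_outside[OF sp lp] by blast
  have pi: "path_image ?h = c2 ` path_image g" by (simp add: path_image_compose)
  have "c2 x \<in> closure (inside (c2 ` path_image g))"
    using fr pi x frontier_def by (metis DiffD1 image_eqI)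
  then have "r2 (c2 x) \<in> r2 ` closure (inside (c2 ` path_image g))" by blast
  also have "\<dots> \<subseteq> closure (r2 ` inside (c2 ` path_image g))"
    by (intro image_closure_subset linear_continuous_on closed_closure closure_subset)
       (use r2_linear linear_conv_bounded_linear in blast)
  also have "\<dots> \<subseteq> closure (inside (path_image g))"
    by (intro closure_mono) (auto intro: inside_c2)
  finally show "x \<in> closure (inside (path_image g))" by simp
qed

lemma polygon_closure_inside:
  fixes A B C D :: "real^2"
  assumes d: "A \<noteq> B" "B \<noteq> C" "C \<noteq> D" "D \<noteq> A"
    and i1: "closed_segment A B \<inter> closed_segment B C \<subseteq> {B}"
    and i2: "closed_segment B C \<inter> closed_segment C D \<subseteq> {C}"
    and i3: "closed_segment C D \<inter> closed_segment D A \<subseteq> {D}"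
    and i4: "closed_segment D A \<inter> closed_segment A B \<subseteq> {A}"
    and i5: "closed_segment A B \<inter> closed_segment C D = {}"
    and i6: "closed_segment B C \<inter> closed_segment D A = {}"
  shows "closed_segment A B \<union> closed_segment B C \<union> closed_segment C D \<union> closed_segment D A
     \<subseteq> closure (inside (closed_segment A B \<union> closed_segment B C \<union> closed_segment C D \<union> closed_segment D A))"
proof -
  let ?g3 = "linepath C D +++ linepath D A"
  let ?g2 = "linepath B C +++ ?g3"
  let ?g = "linepath A B +++ ?g2"
  have a3: "arc ?g3" using d i3 by (intro arc_join) auto
  have p3: "path_image ?g3 = closed_segment C D \<union> closed_segment D A" by (simp add: path_image_join)
  have a2: "arc ?g2" using d i2 i3 i6 a3 p3 by (intro arc_join) auto
  have p2: "path_image ?g2 = closed_segment B C \<union> closed_segment C D \<union> closed_segment D A"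
    by (simp add: path_image_join Un_assoc)
  have sp: "simple_path ?g" using d i1 i2 i3 i4 i5 i6 a2 p2 by (intro simple_path_join_loop) (auto simp: Int_Un_distrib)
  have pg: "path_image ?g = closed_segment A B \<union> closed_segment B C \<union> closed_segment C D \<union> closed_segment D A"
    by (simp add: path_image_join Un_assoc)
  show ?thesis using JT[OF sp] pg by simp
qed



lemma dich:
  fixes S T :: "'a::real_normed_vector set"
  assumes "connected S" "S \<inter> frontier T = {}" "S \<inter> interior T \<noteq> {}" "closed T"
  shows "S \<subseteq> interior T"
proof -
  have ST: "S \<inter> T \<noteq> {}" using assms(3) interior_subset by blast
  have "\<not> (S - T \<noteq> {})" using connected_Int_frontier[OF assms(1) ST] assms(2) by blast
  then have "S \<subseteq> T" by blast
  then show ?thesis using assms(2,4) by (auto simp: frontier_def closure_closed)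
qed

lemma convex_pos_affine:
  fixes f :: "'a::real_vector \<Rightarrow> real"
  assumes aff: "\<And>x y u v. u + v = 1 \<Longrightarrow> f (u *\<^sub>R x + v *\<^sub>R y) = u * f x + v * f y"
  shows "convex {x. 0 < f x}" "convex {x. f x < 0}"
proof -
  show "convex {x. 0 < f x}"
    unfolding convex_def
  proof (intro ballI allI impI)
    fix x y u v assume x: "x \<in> {x. 0 < f x}" and y: "y \<in> {x. 0 < f x}" and uv: "0 \<le> (u::real)" "0 \<le> v" "u + v = 1"
    have "0 < u * f x + v * f y"
    proof (cases "u = 0")
      case True then show ?thesis using uv y by simp
    next
      case False then have "0 < u" using uv by simp
      then show ?thesis using x y uv by (simp add: add_pos_nonneg)
    qed
    then show "u *\<^sub>R x + v *\<^sub>R y \<in> {x. 0 < f x}" using aff[OF uv(3)] by simp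
  qed
  show "convex {x. f x < 0}"
    unfolding convex_def
  proof (intro ballI allI impI)
    fix x y u v assume x: "x \<in> {x. f x < 0}" and y: "y \<in> {x. f x < 0}" and uv: "0 \<le> (u::real)" "0 \<le> v" "u + v = 1"
    have "u * f x + v * f y < 0"
    proof (cases "u = 0")
      case True then show ?thesis using uv y by simp
    next
      case False then have "0 < u" using uv by simp
      then have "u * f x < 0" using x by (simp add: mult_pos_neg)
      moreover have "v * f y \<le> 0" using y uv by (simp add: mult_nonneg_nonpos)
      ultimately show ?thesis by simp
    qed
    then show "u *\<^sub>R x + v *\<^sub>R y \<in> {x. f x < 0}" using aff[OF uv(3)] by simp
  qed
qed

lemma cr_aff:
  assumes "u + v = 1"
  shows "cr W ((u *\<^sub>R x + v *\<^sub>R y) - A) = u * cr W (x - A) + v * cr W (y - A)"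
proof -
  have v: "v = 1 - u" using assms by simp
  show ?thesis unfolding v cr_def by (simp add: algebra_simps)
qed

lemma cr_shift:
  "cr W ((y + e *\<^sub>R V) - A) = cr W (y - A) + e * cr W V"
  unfolding cr_def by (simp add: algebra_simps)

lemma core:
  fixes A B C D P :: "real^2" and SW :: "(real^2) set"
  defines "SQ \<equiv> closed_segment A B \<union> closed_segment B C \<union> closed_segment C D \<union> closed_segment D A"
  assumes d: "A \<noteq> B" "B \<noteq> C" "C \<noteq> D" "D \<noteq> A"
    and i1: "closed_segment A B \<inter> closed_segment B C \<subseteq> {B}"
    and i2: "closed_segment B C \<inter> closed_segment C D \<subseteq> {C}"
    and i3: "closed_segment C D \<inter> closed_segment D A \<subseteq> {D}"
    and i4: "closed_segment D A \<inter> closed_segment A B \<subseteq> {A}"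
    and i5: "closed_segment A B \<inter> closed_segment C D = {}"
    and i6: "closed_segment B C \<inter> closed_segment D A = {}"
    and sAB: "closed_segment P A \<inter> closed_segment A B \<subseteq> {A}"
    and sBA: "closed_segment P B \<inter> closed_segment A B \<subseteq> {B}"
    and pa_bc: "closed_segment P A \<inter> closed_segment B C = {}"
    and pa_cd: "closed_segment P A \<inter> closed_segment C D = {}"
    and pa_da: "closed_segment P A \<inter> closed_segment D A \<subseteq> {A}"
    and pb_bc: "closed_segment P B \<inter> closed_segment B C \<subseteq> {B}"
    and pb_cd: "closed_segment P B \<inter> closed_segment C D = {}"
    and pb_da: "closed_segment P B \<inter> closed_segment D A = {}"
    and out: "P \<in> outside SQ"
    and SW: "closed SW" "SQ \<union> closed_segment P A \<union> closed_segment P B \<subseteq> SW"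
    and fr: "closed_segment A B \<subseteq> frontier (outside SW)"
  shows "\<exists>s t. 0 < s \<and> 0 < t \<and> A + s *\<^sub>R (D - A) = B + t *\<^sub>R (C - B) \<and> cr (B - A) (C - A) \<noteq> 0"
proof -
  define T where "T = convex hull {P, A, B}"
  have PnSQ: "P \<notin> SQ" using out outside_no_overlap by blast
  have ncol: "\<not> collinear {P, A, B}"
  proof
    assume "collinear {P, A, B}"
    then have "P \<in> closed_segment A B \<or> A \<in> closed_segment B P \<or> B \<in> closed_segment P A"
      by (simp add: collinear_between_cases between_mem_segment)
    then show False
    proof (elim disjE)
      assume "P \<in> closed_segment A B" then show False using PnSQ unfolding SQ_def by blast
    next
      assume "A \<in> closed_segment B P"
      then have "A \<in> closed_segment P B \<inter> closed_segment A B" by (simp add: closed_segment_commute)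
      then show False using sBA d(1) by blast
    next
      assume "B \<in> closed_segment P A"
      then have "B \<in> closed_segment P A \<inter> closed_segment A B" by simp
      then show False using sAB d(1) by blast
    qed
  qed
  have DIM2: "DIM(real^2) = 2" by simp
  have fT: "frontier T = closed_segment P A \<union> closed_segment A B \<union> closed_segment B P"
    unfolding T_def by (rule frontier_of_triangle[OF DIM2])
  have closedT: "closed T" unfolding T_def
    by (simp add: compact_imp_closed compact_convex_hull finite_imp_compact)
  have intT_iff: "\<And>x. x \<in> interior T \<longleftrightarrow> (\<exists>u v w. 0 < u \<and> 0 < v \<and> 0 < w \<and> u + v + w = 1 \<and> x = u *\<^sub>R P + v *\<^sub>R A + w *\<^sub>R B)"
    unfolding T_def interior_convex_hull_3_minimal[OF ncol DIM2] by auto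
  have intT_out: "interior T \<inter> outside SW = {}"
  proof -
    have "inside (closed_segment P A \<union> closed_segment A B \<union> closed_segment B P) = interior T"
      unfolding T_def by (rule inside_of_triangle[OF DIM2])
    moreover have "closed_segment P A \<union> closed_segment A B \<union> closed_segment B P \<subseteq> SW"
      using SW(2) unfolding SQ_def by (auto simp: closed_segment_commute)
    ultimately have "interior T - SW \<subseteq> inside SW" using inside_mono by blast
    then show ?thesis using inside_Int_outside outside_no_overlap by blast
  qed
  have oAB: "\<And>x. x \<in> closed_segment A B \<Longrightarrow> cr (B - A) (x - A) = 0"
  proof -
    fix x assume "x \<in> closed_segment A B"
    then obtain u where "x = (1 - u) *\<^sub>R A + u *\<^sub>R B" by (auto simp: in_segment)
    then have "x - A = u *\<^sub>R (B - A)" by (simp add: algebra_simps)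
    then have "cr (B - A) (x - A) = cr (B - A) (u *\<^sub>R (B - A))" by simp
    also have "\<dots> = 0" by (simp add: cr_def algebra_simps)
    finally show "cr (B - A) (x - A) = 0" .
  qed
  have oP: "cr (B - A) (P - A) \<noteq> 0" using cr_zero_collinear ncol by blast
  have fr_int: "frontier T \<inter> interior T = {}" by (auto simp: frontier_def)
  show ?thesis
  proof (cases "interior T \<inter> SQ = {}")
    case False
    then obtain x where x: "x \<in> interior T" "x \<in> SQ" by blast
    have C_nf: "C \<notin> frontier T"
      unfolding fT using pa_bc i1 pb_bc d by (auto simp: closed_segment_commute)
    have D_nf: "D \<notin> frontier T"
      unfolding fT using pa_da i4 pb_da d by (auto simp: closed_segment_commute)
    have CD_nf: "closed_segment C D \<inter> frontier T = {}"
      unfolding fT using pa_cd i5 pb_cd by (auto simp: closed_segment_commute)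
    have BC_nf: "open_segment B C \<inter> frontier T = {}"
      unfolding fT open_segment_def using pa_bc i1 pb_bc by (auto simp: closed_segment_commute)
    have DA_nf: "open_segment D A \<inter> frontier T = {}"
      unfolding fT open_segment_def using pa_da i4 pb_da by (auto simp: closed_segment_commute)
    have CDin: "C \<in> interior T \<and> D \<in> interior T" if h: "C \<in> interior T \<or> D \<in> interior T"
    proof -
      have "closed_segment C D \<subseteq> interior T"
        by (rule dich[OF _ CD_nf _ closedT]) (use h in auto)
      then show ?thesis by auto
    qed
    have int_of_closure: "y \<in> interior T" if "y \<in> closure (interior T)" "y \<notin> frontier T" for y
    proof -
      have "closure (interior T) \<subseteq> T" using closedT closure_minimal interior_subset by blast
      then show ?thesis using that closedT by (auto simp: frontier_def closure_closed)
    qed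
    have key: "C \<in> interior T \<or> D \<in> interior T"
    proof -
      from x(2) consider "x \<in> closed_segment A B" | "x \<in> closed_segment B C" | "x \<in> closed_segment C D" | "x \<in> closed_segment D A"
        unfolding SQ_def by blast
      then show ?thesis
      proof cases
        case 1 then have "x \<in> frontier T" unfolding fT by blast
        then show ?thesis using x(1) fr_int by blast
      next
        case 2
        have "B \<in> frontier T" unfolding fT by simp
        then have "x \<noteq> B" using x(1) fr_int by blast
        show ?thesis
        proof (cases "x = C")
          case True then show ?thesis using x by simp
        next
          case False
          then have xo: "x \<in> open_segment B C" using 2 \<open>x \<noteq> B\<close> by (simp add: open_segment_def)
          have "open_segment B C \<subseteq> interior T"
            by (rule dich[OF _ BC_nf _ closedT]) (use xo x(1) convex_connected in auto)
          then have "closure (open_segment B C) \<subseteq> closure (interior T)" by (rule closure_mono)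
          then have "C \<in> closure (interior T)" using d(2) by auto
          then show ?thesis using int_of_closure C_nf by blast
        qed
      next
        case 3
        then show ?thesis using CDin x(1) dich[OF _ CD_nf _ closedT] by blast
      next
        case 4
        have "A \<in> frontier T" unfolding fT by simp
        then have "x \<noteq> A" using x(1) fr_int by blast
        show ?thesis
        proof (cases "x = D")
          case True then show ?thesis using x by simp
        next
          case False
          then have xo: "x \<in> open_segment D A" using 4 \<open>x \<noteq> A\<close> by (simp add: open_segment_def)
          have "open_segment D A \<subseteq> interior T"
            by (rule dich[OF _ DA_nf _ closedT]) (use xo x(1) convex_connected in auto)
          then have "closure (open_segment D A) \<subseteq> closure (interior T)" by (rule closure_mono)
          then have "D \<in> closure (interior T)" using d(4) by auto
          then show ?thesis using int_of_closure D_nf by blast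
        qed
      qed
    qed
    with CDin have CD: "C \<in> interior T" "D \<in> interior T" by auto
    obtain a' b' c' where C: "0 < a'" "0 < b'" "0 < c'" "a' + b' + c' = 1" "C = a' *\<^sub>R P + b' *\<^sub>R A + c' *\<^sub>R B"
      using CD(1) intT_iff by blast
    obtain a b c where D: "0 < a" "0 < b" "0 < c" "a + b + c = 1" "D = a *\<^sub>R P + b *\<^sub>R A + c *\<^sub>R B"
      using CD(2) intT_iff by blast
    obtain s t where st: "0 < s" "0 < t" "A + s *\<^sub>R (D - A) = B + t *\<^sub>R (C - B)"
      using ray_meet[OF D(1-4) C(1-4), of A P B] C(5) D(5) by blast
    have "cr (B - A) (C - A) = a' * cr (B - A) (P - A)"
      unfolding C(5) by (rule cr_bary[OF C(4)])
    then have "cr (B - A) (C - A) \<noteq> 0" using oP C(1) by simp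
    then show ?thesis using st by blast
  next
    case True
    define m where "m = midpoint A B"
    have mAB: "m \<in> closed_segment A B" by (simp add: m_def)
    define K where "K = closed_segment B C \<union> closed_segment C D \<union> closed_segment D A \<union> closed_segment P A \<union> closed_segment P B"
    have closedK: "closed K" unfolding K_def by (simp add: closed_Un)
    have mA: "m \<noteq> A" "m \<noteq> B" using d(1) by (simp_all add: m_def)
    have mK: "m \<notin> K"
    proof
      assume "m \<in> K"
      then consider "m \<in> closed_segment B C" | "m \<in> closed_segment C D" | "m \<in> closed_segment D A"
        | "m \<in> closed_segment P A" | "m \<in> closed_segment P B" unfolding K_def by blast
      then show False
      proof cases
        case 1 then show False using i1 mAB mA by blast
      next
        case 2 then show False using i5 mAB by blast
      next
        case 3 then show False using i4 mAB mA by blast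
      next
        case 4 then show False using sAB mAB mA by blast
      next
        case 5 then show False using sBA mAB mA by blast
      qed
    qed
    obtain r where r: "r > 0" "ball m r \<subseteq> - K"
      using closedK mK open_contains_ball[of "- K"] by (auto simp: closed_def)
    define oP where "oP = cr (B - A) (P - A)"
    define f where "f = (\<lambda>x. oP * cr (B - A) (x - A))"
    have faff: "\<And>x y u v. u + v = 1 \<Longrightarrow> f (u *\<^sub>R x + v *\<^sub>R y) = u * f x + v * f y"
      unfolding f_def using cr_aff by (simp add: algebra_simps)
    define Hp where "Hp = ball m r \<inter> {x. 0 < f x}"
    define Hm where "Hm = ball m r \<inter> {x. f x < 0}"
    have cvx: "convex Hp" "convex Hm" unfolding Hp_def Hm_def
      using convex_pos_affine[OF faff] by (simp_all add: convex_Int)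
    have om: "cr (B - A) (m - A) = 0" using oAB mAB by blast
    define \<epsilon> where "\<epsilon> = min (1/2) (r / (2 * (norm (P - m) + 1)))"
    have eps: "0 < \<epsilon>" "\<epsilon> \<le> 1/2" "\<epsilon> * (norm (P - m) + 1) \<le> r / 2"
    proof -
      have "0 < r / (2 * (norm (P - m) + 1))" using r by (intro divide_pos_pos) (auto intro: add_nonneg_pos)
      then show "0 < \<epsilon>" by (simp add: \<epsilon>_def)
      show "\<epsilon> \<le> 1/2" unfolding \<epsilon>_def by (rule min.cobounded1)
      have "\<epsilon> \<le> r / (2 * (norm (P - m) + 1))" by (simp add: \<epsilon>_def)
      then show "\<epsilon> * (norm (P - m) + 1) \<le> r / 2"
        by (simp add: field_simps add_pos_nonneg)
    qed
    define w where "w = m + \<epsilon> *\<^sub>R (P - m)"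
    have w_ball: "w \<in> ball m r"
    proof -
      have "dist m w = \<epsilon> * norm (P - m)" using eps by (simp add: w_def dist_norm)
      also have "\<dots> < r"
      proof -
        have "\<epsilon> * norm (P - m) < \<epsilon> * (norm (P - m) + 1)" using eps(1) by simp
        then show ?thesis using eps(3) r by linarith
      qed
      finally show ?thesis by simp
    qed
    have w_eq: "w = (1 - \<epsilon>) *\<^sub>R m + \<epsilon> *\<^sub>R P" by (simp add: w_def algebra_simps)
    have fw: "f w = \<epsilon> * (oP * oP)"
    proof -
      have "cr (B - A) (w - A) = (1 - \<epsilon>) * cr (B - A) (m - A) + \<epsilon> * cr (B - A) (P - A)"
        unfolding w_eq by (rule cr_aff) simp
      then show ?thesis using om by (simp add: f_def oP_def)
    qed
    have w_int: "w \<in> interior T"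
    proof -
      have "w = \<epsilon> *\<^sub>R P + ((1 - \<epsilon>) / 2) *\<^sub>R A + ((1 - \<epsilon>) / 2) *\<^sub>R B"
        unfolding w_eq m_def midpoint_def by (simp add: algebra_simps scaleR_add_right)
      moreover have "0 < (1 - \<epsilon>) / 2" using eps by simp
      ultimately show ?thesis unfolding intT_iff using eps
        by (intro exI[of _ \<epsilon>] exI[of _ "(1 - \<epsilon>) / 2"]) simp
    qed
    have Hp_int: "Hp \<subseteq> interior T"
    proof (rule dich[OF _ _ _ closedT])
      show "connected Hp" using cvx convex_connected by blast
      show "Hp \<inter> frontier T = {}"
      proof -
        have "x \<notin> Hp" if "x \<in> frontier T" for x
        proof
          assume xH: "x \<in> Hp"
          then have "x \<notin> K" using r(2) unfolding Hp_def by blast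
          then have "x \<in> closed_segment A B" using that unfolding fT K_def by (auto simp: closed_segment_commute)
          then have "f x = 0" using oAB by (simp add: f_def)
          then show False using xH unfolding Hp_def by simp
        qed
        then show ?thesis by blast
      qed
      show "Hp \<inter> interior T \<noteq> {}"
      proof -
        have "0 < oP * oP" using oP unfolding oP_def by (auto simp: zero_less_mult_iff linorder_neq_iff)
        then have "0 < f w" unfolding fw using eps by (simp add: mult_pos_pos)
        then have "w \<in> Hp" using w_ball unfolding Hp_def by simp
        then show ?thesis using w_int by blast
      qed
    qed
    have closedSQ: "closed SQ" unfolding SQ_def by (simp add: closed_Un)
    have intT_sub: "interior T \<subseteq> outside SQ"
    proof
      fix y assume y: "y \<in> interior T"
      have "P \<in> closure (interior T)"
      proof -
        have "closure (interior T) = closure T"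
          using convex_closure_interior[of T] w_int unfolding T_def by auto
        then show ?thesis using closedT by (simp add: T_def hull_inc closure_closed)
      qed
      moreover obtain \<delta> where \<delta>: "\<delta> > 0" "ball P \<delta> \<subseteq> outside SQ"
        using open_outside[OF closedSQ] out open_contains_ball by blast
      ultimately obtain v where v: "v \<in> interior T" "dist v P < \<delta>"
        using closure_approachable by blast
      then have vout: "v \<in> outside SQ" using \<delta> by (auto simp: dist_commute)
      have "connected_component (- SQ) v y"
        unfolding connected_component_def
        by (rule exI[of _ "interior T"])
           (use True v y convex_connected[OF convex_interior[OF convex_convex_hull]] in \<open>auto simp: T_def\<close>)
      then show "y \<in> outside SQ" using vout outside_same_component by blast
    qed
    have pert: "\<exists>y\<in>U. y \<in> ball m r \<and> f y \<noteq> 0" if U: "open U" "y0 \<in> U" "dist m y0 < r / 2" for U y0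
    proof (cases "f y0 = 0")
      case False then show ?thesis using U r by (intro bexI[of _ y0]) auto
    next
      case True
      obtain \<delta> where \<delta>: "\<delta> > 0" "ball y0 \<delta> \<subseteq> U" using U open_contains_ball by blast
      define e where "e = min \<delta> (r / 2) / (2 * (norm (P - A) + 1))"
      have e: "0 < e" unfolding e_def using \<delta> r
        by (intro divide_pos_pos) (auto intro: add_nonneg_pos)
      have en: "e * norm (P - A) < min \<delta> (r / 2)"
      proof -
        have np: "0 < norm (P - A) + 1" by (rule add_nonneg_pos) simp_all
        have "e * (norm (P - A) + 1) = min \<delta> (r / 2) / 2" unfolding e_def
          using np by (simp add: field_simps)
        moreover have "0 < min \<delta> (r / 2)" using \<delta> r by simp
        moreover have "e * norm (P - A) < e * (norm (P - A) + 1)" using e by simp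
        ultimately show ?thesis by linarith
      qed
      define y where "y = y0 + e *\<^sub>R (P - A)"
      have dy: "dist y0 y < min \<delta> (r / 2)" using en e by (simp add: y_def dist_norm)
      have "y \<in> U" using \<delta> dy by (auto simp: dist_commute)
      moreover have "y \<in> ball m r" using dy U(3) dist_triangle[of m y y0] by (simp add: dist_commute)
      moreover have "f y = e * (oP * oP)"
        using True unfolding f_def y_def cr_shift by (simp add: oP_def algebra_simps)
      then have "f y \<noteq> 0" using e oP oP_def by simp
      ultimately show ?thesis by blast
    qed
    have SQsub: "SQ \<subseteq> closure (inside SQ)"
      unfolding SQ_def by (rule polygon_closure_inside[OF d i1 i2 i3 i4 i5 i6])
    have "m \<in> SQ" using mAB unfolding SQ_def by blast
    then obtain y0 where y0: "y0 \<in> inside SQ" "dist y0 m < r / 2"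
      using SQsub closure_approachable r(1) by (metis half_gt_zero subsetD)
    obtain y where y: "y \<in> inside SQ" "y \<in> ball m r" "f y \<noteq> 0"
      using pert[OF open_inside[OF closedSQ] y0(1)] y0(2) by (auto simp: dist_commute)
    have "m \<in> closure (outside SW)" using fr mAB by (auto simp: frontier_def)
    then obtain z0 where z0: "z0 \<in> outside SW" "dist z0 m < r / 2"
      using closure_approachable r(1) by (metis half_gt_zero)
    obtain z where z: "z \<in> outside SW" "z \<in> ball m r" "f z \<noteq> 0"
      using pert[OF open_outside[OF SW(1)] z0(1)] z0(2) by (auto simp: dist_commute)
    have yH: "y \<in> Hm"
    proof -
      have "y \<notin> Hp" using y(1) Hp_int intT_sub inside_Int_outside by blast
      then show ?thesis using y unfolding Hp_def Hm_def by auto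
    qed
    have zH: "z \<in> Hm"
    proof -
      have "z \<notin> Hp" using z(1) Hp_int intT_out by blast
      then show ?thesis using z unfolding Hp_def Hm_def by auto
    qed
    have zout: "z \<in> outside SQ" using z(1) outside_mono[of SQ SW] SW(2) by blast
    have HmSQ: "Hm \<subseteq> - SQ"
    proof
      fix x assume xH: "x \<in> Hm"
      show "x \<in> - SQ"
      proof
        assume "x \<in> SQ"
        moreover have "x \<notin> K" using xH r(2) unfolding Hm_def by blast
        ultimately have "x \<in> closed_segment A B" unfolding SQ_def K_def by blast
        then have "f x = 0" using oAB by (simp add: f_def)
        then show False using xH unfolding Hm_def by simp
      qed
    qed
    have "connected_component (- SQ) z y"
      unfolding connected_component_def
      by (rule exI[of _ Hm]) (use cvx convex_connected HmSQ yH zH in auto)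
    then have "y \<in> outside SQ" using zout outside_same_component by blast
    then show ?thesis using y(1) inside_Int_outside by blast
  qed
qed



lemma bridge:
  fixes q :: "nat \<Rightarrow> real^2"
  assumes pl: "planar_sl_drawing q {0..4} W4_edges"
    and C4: "C4_edges = {{i1,i2},{i2,i3},{i3,i4},{i4,i1}}"
    and ds: "distinct [0,i1,i2,i3,i4]"
    and rng: "{i1,i2,i3,i4} = {1..4}"
    and out: "q 0 \<in> outside (sl_drawing q C4_edges)"
    and fr: "convex hull (q ` {i1,i2}) \<subseteq> frontier (outside (sl_drawing q W4_edges))"
  shows "\<exists>s t. 0 < s \<and> 0 < t \<and> q i1 + s *\<^sub>R (q i4 - q i1) = q i2 + t *\<^sub>R (q i3 - q i2)
           \<and> cr (q i2 - q i1) (q i3 - q i1) \<noteq> 0"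
proof -
  have W4: "W4_edges = {{i1,i2},{i2,i3},{i3,i4},{i4,i1},{0,i1},{0,i2},{0,i3},{0,i4}}"
  proof -
    have "{{0, k} |k. k \<in> {1..4::nat}} = {{0,i1},{0,i2},{0,i3},{0,i4}}"
      unfolding rng[symmetric] by blast
    then show ?thesis unfolding W4_edges_def C4 by auto
  qed
  have inj: "inj_on q {0..4}"
    and F3: "\<And>e f. e \<in> W4_edges \<Longrightarrow> f \<in> W4_edges \<Longrightarrow> e \<noteq> f \<Longrightarrow>
              convex hull (q ` e) \<inter> convex hull (q ` f) \<subseteq> q ` (e \<inter> f)"
    using pl unfolding planar_sl_drawing_def by blast+
  have seg: "\<And>x y. convex hull (q ` {x,y}) = closed_segment (q x) (q y)"
    by (simp add: segment_convex_hull)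
  have G: "closed_segment (q x) (q y) \<inter> closed_segment (q z) (q w) \<subseteq> q ` ({x,y} \<inter> {z,w})"
    if "{x,y} \<in> W4_edges" "{z,w} \<in> W4_edges" "{x,y} \<noteq> {z,w}" for x y z w
    using F3[OF that] by (simp only: seg)
  have r4: "i1 \<in> {0..4}" "i2 \<in> {0..4}" "i3 \<in> {0..4}" "i4 \<in> {0..4}" using rng by auto
  have dq: "q i1 \<noteq> q i2" "q i2 \<noteq> q i3" "q i3 \<noteq> q i4" "q i4 \<noteq> q i1"
    using inj r4 ds by (auto dest: inj_onD)
  note ds' = ds[simplified]
  have i1: "closed_segment (q i1) (q i2) \<inter> closed_segment (q i2) (q i3) \<subseteq> {q i2}"
    using G[of i1 i2 i2 i3] ds' by (auto simp: W4 doubleton_eq_iff)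
  have i2: "closed_segment (q i2) (q i3) \<inter> closed_segment (q i3) (q i4) \<subseteq> {q i3}"
    using G[of i2 i3 i3 i4] ds' by (auto simp: W4 doubleton_eq_iff)
  have i3: "closed_segment (q i3) (q i4) \<inter> closed_segment (q i4) (q i1) \<subseteq> {q i4}"
    using G[of i3 i4 i4 i1] ds' by (auto simp: W4 doubleton_eq_iff)
  have i4: "closed_segment (q i4) (q i1) \<inter> closed_segment (q i1) (q i2) \<subseteq> {q i1}"
    using G[of i4 i1 i1 i2] ds' by (auto simp: W4 doubleton_eq_iff)
  have i5: "closed_segment (q i1) (q i2) \<inter> closed_segment (q i3) (q i4) = {}"
    using G[of i1 i2 i3 i4] ds' by (auto simp: W4 doubleton_eq_iff)
  have i6: "closed_segment (q i2) (q i3) \<inter> closed_segment (q i4) (q i1) = {}"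
    using G[of i2 i3 i4 i1] ds' by (auto simp: W4 doubleton_eq_iff)
  have sAB: "closed_segment (q 0) (q i1) \<inter> closed_segment (q i1) (q i2) \<subseteq> {q i1}"
    using G[of 0 i1 i1 i2] ds' by (auto simp: W4 doubleton_eq_iff)
  have sBA: "closed_segment (q 0) (q i2) \<inter> closed_segment (q i1) (q i2) \<subseteq> {q i2}"
    using G[of 0 i2 i1 i2] ds' by (auto simp: W4 doubleton_eq_iff)
  have pa_bc: "closed_segment (q 0) (q i1) \<inter> closed_segment (q i2) (q i3) = {}"
    using G[of 0 i1 i2 i3] ds' by (auto simp: W4 doubleton_eq_iff)
  have pa_cd: "closed_segment (q 0) (q i1) \<inter> closed_segment (q i3) (q i4) = {}"
    using G[of 0 i1 i3 i4] ds' by (auto simp: W4 doubleton_eq_iff)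
  have pa_da: "closed_segment (q 0) (q i1) \<inter> closed_segment (q i4) (q i1) \<subseteq> {q i1}"
    using G[of 0 i1 i4 i1] ds' by (auto simp: W4 doubleton_eq_iff)
  have pb_bc: "closed_segment (q 0) (q i2) \<inter> closed_segment (q i2) (q i3) \<subseteq> {q i2}"
    using G[of 0 i2 i2 i3] ds' by (auto simp: W4 doubleton_eq_iff)
  have pb_cd: "closed_segment (q 0) (q i2) \<inter> closed_segment (q i3) (q i4) = {}"
    using G[of 0 i2 i3 i4] ds' by (auto simp: W4 doubleton_eq_iff)
  have pb_da: "closed_segment (q 0) (q i2) \<inter> closed_segment (q i4) (q i1) = {}"
    using G[of 0 i2 i4 i1] ds' by (auto simp: W4 doubleton_eq_iff)
  have SQ: "sl_drawing q C4_edges = closed_segment (q i1) (q i2) \<union> closed_segment (q i2) (q i3)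
            \<union> closed_segment (q i3) (q i4) \<union> closed_segment (q i4) (q i1)"
    unfolding sl_drawing_def C4 by (simp add: segment_convex_hull Un_assoc)
  have SW: "sl_drawing q W4_edges = closed_segment (q i1) (q i2) \<union> closed_segment (q i2) (q i3)
            \<union> closed_segment (q i3) (q i4) \<union> closed_segment (q i4) (q i1)
            \<union> closed_segment (q 0) (q i1) \<union> closed_segment (q 0) (q i2)
            \<union> closed_segment (q 0) (q i3) \<union> closed_segment (q 0) (q i4)"
    unfolding sl_drawing_def W4 by (simp add: segment_convex_hull Un_assoc)
  have cSW: "closed (sl_drawing q W4_edges)" unfolding SW by (simp add: closed_Un)
  have fr': "closed_segment (q i1) (q i2) \<subseteq> frontier (outside (sl_drawing q W4_edges))"
    using fr by (simp add: segment_convex_hull)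
  have out': "q 0 \<in> outside (closed_segment (q i1) (q i2) \<union> closed_segment (q i2) (q i3)
            \<union> closed_segment (q i3) (q i4) \<union> closed_segment (q i4) (q i1))"
    using out SQ by simp
  have sub: "closed_segment (q i1) (q i2) \<union> closed_segment (q i2) (q i3)
            \<union> closed_segment (q i3) (q i4) \<union> closed_segment (q i4) (q i1)
            \<union> closed_segment (q 0) (q i1) \<union> closed_segment (q 0) (q i2) \<subseteq> sl_drawing q W4_edges"
    unfolding SW by blast
  show ?thesis
    by (rule core[OF dq i1 i2 i3 i4 i5 i6 sAB sBA pa_bc pa_cd pa_da pb_bc pb_cd pb_da out' cSW sub fr'])
qed


lemma opp_contra:
  fixes X1 X2 X3 X4 :: "real^2"
  assumes s: "s > 0" "t > 0" and e1: "X1 + s *\<^sub>R (X4 - X1) = X2 + t *\<^sub>R (X3 - X2)"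
    and s': "s' > 0" "t' > 0" and e2: "X3 + s' *\<^sub>R (X2 - X3) = X4 + t' *\<^sub>R (X1 - X4)"
    and n: "cr (X2 - X1) (X3 - X1) \<noteq> 0"
    and dj: "closed_segment X2 X3 \<inter> closed_segment X4 X1 = {}"
  shows False
proof -
  have e11: "X1$1 + s * (X4$1 - X1$1) = X2$1 + t * (X3$1 - X2$1)"
    using arg_cong[OF e1, of "\<lambda>x. x$1"] by simp
  have e12: "X1$2 + s * (X4$2 - X1$2) = X2$2 + t * (X3$2 - X2$2)"
    using arg_cong[OF e1, of "\<lambda>x. x$2"] by simp
  have e21: "X3$1 + s' * (X2$1 - X3$1) = X4$1 + t' * (X1$1 - X4$1)"
    using arg_cong[OF e2, of "\<lambda>x. x$1"] by simp
  have e22: "X3$2 + s' * (X2$2 - X3$2) = X4$2 + t' * (X1$2 - X4$2)"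
    using arg_cong[OF e2, of "\<lambda>x. x$2"] by simp
  define u1 where "u1 = X4$1 - X1$1"
  define u2 where "u2 = X4$2 - X1$2"
  define v1 where "v1 = X3$1 - X2$1"
  define v2 where "v2 = X3$2 - X2$2"
  define \<sigma> where "\<sigma> = s + t' - 1"
  define \<tau> where "\<tau> = t + s' - 1"
  have f1: "\<sigma> * u1 = \<tau> * v1" using e11 e21 unfolding \<sigma>_def \<tau>_def u1_def v1_def
    by algebra
  have f2: "\<sigma> * u2 = \<tau> * v2" using e12 e22 unfolding \<sigma>_def \<tau>_def u2_def v2_def
    by algebra
  have n': "(X2$1 - X1$1) * v2 - (X2$2 - X1$2) * v1 \<noteq> 0"
  proof -
    have "cr (X2 - X1) (X3 - X1) = (X2$1 - X1$1) * v2 - (X2$2 - X1$2) * v1"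
      unfolding cr_def v1_def v2_def by simp algebra
    then show ?thesis using n by simp
  qed
  have st: "\<sigma> = 0 \<and> \<tau> = 0"
  proof (cases "u1 * v2 - u2 * v1 = 0")
    case True
    have "(X2$1 - X1$1) * v2 - (X2$2 - X1$2) * v1 = s * (u1 * v2 - u2 * v1)"
      using e11 e12 unfolding u1_def v1_def u2_def v2_def by algebra
    with True n' show ?thesis by simp
  next
    case False
    have "\<sigma> * (u1 * v2 - u2 * v1) = 0"
      using f1 f2 by algebra
    then have "\<sigma> = 0" using False by simp
    then have "\<tau> * v1 = 0" "\<tau> * v2 = 0" using f1 f2 by simp_all
    moreover have "v1 \<noteq> 0 \<or> v2 \<noteq> 0" using n' by auto
    ultimately show ?thesis using \<open>\<sigma> = 0\<close> by auto
  qed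
  then have ss: "s = 1 - t'" "t = 1 - s'" unfolding \<sigma>_def \<tau>_def by simp_all
  define c where "c = X1 + s *\<^sub>R (X4 - X1)"
  have c1: "c = (1 - (1 - s)) *\<^sub>R X4 + (1 - s) *\<^sub>R X1"
    unfolding c_def by (simp add: vec_eq_iff algebra_simps)
  have c2: "c = (1 - t) *\<^sub>R X2 + t *\<^sub>R X3"
    using e1 unfolding c_def by (simp add: vec_eq_iff algebra_simps)
  have "c \<in> closed_segment X4 X1"
    unfolding in_segment using c1 ss s s' by (intro exI[of _ "1 - s"]) simp
  moreover have "c \<in> closed_segment X2 X3"
    unfolding in_segment using c2 ss s s' by (intro exI[of _ t]) simp
  ultimately show False using dj by blast
qed


lemma C4_explicit: "C4_edges = {{1,2},{2,3},{3,4},{4,1::nat}}"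
proof -
  have "{1..4::nat} = {1,2,3,4}" by auto
  then have c: "C4_edges = (\<lambda>k. {k, k mod 4 + 1}) ` {1,2,3,4}" unfolding C4_edges_def by auto
  have e: "(1::nat) mod 4 + 1 = 2" "(2::nat) mod 4 + 1 = 3" "(3::nat) mod 4 + 1 = 4" "(4::nat) mod 4 + 1 = 1"
    by simp_all
  show ?thesis unfolding c by (simp only: image_insert image_empty e)
qed

lemma good_R:
  fixes a :: "nat \<Rightarrow> real^2"
  assumes g: "good_edge a k" and k: "k = i1" and nx: "k mod 4 + 1 = i2"
    and C4: "C4_edges = {{i1,i2},{i2,i3},{i3,i4},{i4,i1}}"
    and ds: "distinct [0,i1,i2,i3,i4]" and rng: "{i1,i2,i3,i4} = {1..4}"
  shows "\<exists>s t. 0 < s \<and> 0 < t \<and> a i1 + s *\<^sub>R (a i4 - a i1) = a i2 + t *\<^sub>R (a i3 - a i2)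
           \<and> cr (a i2 - a i1) (a i3 - a i1) \<noteq> 0"
proof -
  obtain p where p: "p \<in> outside (sl_drawing a C4_edges)" "planar_sl_drawing (a(0:=p)) {0..4} W4_edges"
    "convex hull ((a(0:=p)) ` {k, k mod 4 + 1}) \<subseteq> frontier (outside (sl_drawing (a(0:=p)) W4_edges))"
    using g unfolding good_edge_def by blast
  have same: "sl_drawing (a(0:=p)) C4_edges = sl_drawing a C4_edges"
    unfolding sl_drawing_def C4 using ds by simp
  have out: "(a(0:=p)) 0 \<in> outside (sl_drawing (a(0:=p)) C4_edges)" using p(1) same by simp
  have fr: "convex hull ((a(0:=p)) ` {i1, i2}) \<subseteq> frontier (outside (sl_drawing (a(0:=p)) W4_edges))"
    using p(3) k nx by simp
  have "\<exists>s t. 0 < s \<and> 0 < t \<and> (a(0:=p)) i1 + s *\<^sub>R ((a(0:=p)) i4 - (a(0:=p)) i1)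
           = (a(0:=p)) i2 + t *\<^sub>R ((a(0:=p)) i3 - (a(0:=p)) i2)
           \<and> cr ((a(0:=p)) i2 - (a(0:=p)) i1) ((a(0:=p)) i3 - (a(0:=p)) i1) \<noteq> 0"
    by (rule bridge[OF p(2) C4 ds rng out fr])
  then show ?thesis using ds by simp
qed

theorem lemma8:
  fixes a :: "nat \<Rightarrow> real^2"
  assumes "planar_sl_drawing a {1..4} C4_edges"
  shows "card {k \<in> {1..4::nat}. good_edge a k} \<le> 2"
proof -
  have C4: "C4_edges = {{1,2},{2,3},{3,4},{4,1::nat}}" by (rule C4_explicit)
  have pl: "\<And>e f. e \<in> C4_edges \<Longrightarrow> f \<in> C4_edges \<Longrightarrow> e \<noteq> f \<Longrightarrow>
              convex hull (a ` e) \<inter> convex hull (a ` f) \<subseteq> a ` (e \<inter> f)"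
    using assms unfolding planar_sl_drawing_def by blast
  have m: "{1,2::nat} \<in> C4_edges" "{2,3::nat} \<in> C4_edges" "{3,4::nat} \<in> C4_edges" "{4,1::nat} \<in> C4_edges"
    unfolding C4 by blast+
  have ne: "{2,3::nat} \<noteq> {4,1}" "{3,4::nat} \<noteq> {1,2}" by auto
  have em: "{2,3::nat} \<inter> {4,1} = {}" "{3,4::nat} \<inter> {1,2} = {}" by auto
  have dj1: "closed_segment (a 2) (a 3) \<inter> closed_segment (a 4) (a 1) = {}"
    using pl[OF m(2) m(4) ne(1)] em(1) by (simp add: segment_convex_hull)
  have dj2: "closed_segment (a 3) (a 4) \<inter> closed_segment (a 1) (a 2) = {}"
    using pl[OF m(3) m(1) ne(2)] em(2) by (simp add: segment_convex_hull)
  have rng: "{1,2,3,4} = {1..4::nat}" "{2,3,4,1} = {1..4::nat}" "{3,4,1,2} = {1..4::nat}" "{4,1,2,3} = {1..4::nat}"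
    by auto
  have ds: "distinct [0,1,2,3,4::nat]" "distinct [0,2,3,4,1::nat]" "distinct [0,3,4,1,2::nat]" "distinct [0,4,1,2,3::nat]"
    by simp_all
  have e: "(1::nat) mod 4 + 1 = 2" "(2::nat) mod 4 + 1 = 3" "(3::nat) mod 4 + 1 = 4" "(4::nat) mod 4 + 1 = 1"
    by simp_all
  have C4r: "C4_edges = {{1,2},{2,3},{3,4},{4,1::nat}}" "C4_edges = {{2,3},{3,4},{4,1},{1,2::nat}}"
            "C4_edges = {{3,4},{4,1},{1,2},{2,3::nat}}" "C4_edges = {{4,1},{1,2},{2,3},{3,4::nat}}"
    unfolding C4 by blast+
  have n13: "\<not> (good_edge a 1 \<and> good_edge a 3)"
  proof
    assume h: "good_edge a 1 \<and> good_edge a 3"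
    obtain s t where st: "0 < s" "0 < t" "a 1 + s *\<^sub>R (a 4 - a 1) = a 2 + t *\<^sub>R (a 3 - a 2)"
      "cr (a 2 - a 1) (a 3 - a 1) \<noteq> 0"
      using good_R[OF conjunct1[OF h] refl e(1) C4r(1) ds(1) rng(1)] by blast
    obtain s' t' where st': "0 < s'" "0 < t'" "a 3 + s' *\<^sub>R (a 2 - a 3) = a 4 + t' *\<^sub>R (a 1 - a 4)"
      using good_R[OF conjunct2[OF h] refl e(3) C4r(3) ds(3) rng(3)] by blast
    show False by (rule opp_contra[OF st(1-3) st'(1-3) st(4) dj1])
  qed
  have n24: "\<not> (good_edge a 2 \<and> good_edge a 4)"
  proof
    assume h: "good_edge a 2 \<and> good_edge a 4"
    obtain s t where st: "0 < s" "0 < t" "a 2 + s *\<^sub>R (a 1 - a 2) = a 3 + t *\<^sub>R (a 4 - a 3)"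
      "cr (a 3 - a 2) (a 4 - a 2) \<noteq> 0"
      using good_R[OF conjunct1[OF h] refl e(2) C4r(2) ds(2) rng(2)] by blast
    obtain s' t' where st': "0 < s'" "0 < t'" "a 4 + s' *\<^sub>R (a 3 - a 4) = a 1 + t' *\<^sub>R (a 2 - a 1)"
      using good_R[OF conjunct2[OF h] refl e(4) C4r(4) ds(4) rng(4)] by blast
    show False by (rule opp_contra[OF st(1-3) st'(1-3) st(4) dj2])
  qed
  define x where "x = (if good_edge a 1 then 1 else (3::nat))"
  define y where "y = (if good_edge a 2 then 2 else (4::nat))"
  have "{k \<in> {1..4::nat}. good_edge a k} \<subseteq> {x, y}"
  proof
    fix k assume k: "k \<in> {k \<in> {1..4::nat}. good_edge a k}"
    then have "k = 1 \<or> k = 2 \<or> k = 3 \<or> k = 4" by auto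
    then show "k \<in> {x, y}" using k n13 n24 unfolding x_def y_def by auto
  qed
  then have "card {k \<in> {1..4::nat}. good_edge a k} \<le> card {x, y}" by (rule card_mono[rotated]) simp
  also have "\<dots> \<le> 2" by (simp add: card_insert_le_m1)
  finally show ?thesis .
qed

end
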